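(* Let $n,l_1,u_1,l_2,u_2$ be non-negative integers and $(f(k))$, $(g(k))$ complex sequences such that the polynomial identity \[ \sum_{k=l_1}^{u_1}f(k)t^k(1-t)^{n-k}=\sum_{k=l_2}^{u_2}g(k)t^k \] holds for all complex $t$. Let $r,s\in\mathbb{C}\setminus\mathbb{Z}^{-}$ with $s\neq0$ and $r-s\notin\mathbb{Z}^{-}$. Then \[ \sum_{k=l_1}^{u_1}\frac{f(k)}{(k+s)\binom{n+r}{k+s}}=\sum_{k=l_2}^{u_2}\frac{g(k)}{(k+s)\binom{k+r}{k+s}}, \] and \[ \sum_{k=l_1}^{u_1}f(k)\frac{H_{n-k+r-s}-H_{n+r}}{(k+s)\binom{n+r}{k+s}}=\sum_{k=l_2}^{u_2}g(k)\frac{H_{r-s}-H_{k+r}}{(k+s)\binom{k+r}{k+s}}. \]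
   Context: $\mathbb{Z}^{-}$ denotes the set of negative integers. For complex $z$ not a negative integer, $H_z=\psi(z+1)+\gamma$ ($\psi$ the digamma function, $\gamma$ Euler's constant). Binomial coefficients with complex entries: $\binom{x}{y}=\frac{\Gamma(x+1)}{\Gamma(y+1)\Gamma(x-y+1)}$. *)

theory Defs
  imports "HOL-Analysis.Analysis"
begin

definition neg_ints :: "complex set" where
  "neg_ints = {of_int k | k. k < 0}"

definition harm :: "complex \<Rightarrow> complex" where
  "harm z = Digamma (z + 1) + of_real euler_mascheroni"

text \<open>Complex binomial coefficient Gamma(x+1)/(Gamma(y+1) Gamma(x-y+1)),
  with 1/Gamma read as the entire function rGamma (zero at the poles of Gamma).\<close>
definition cbinom :: "complex \<Rightarrow> complex \<Rightarrow> complex" where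
  "cbinom x y = Gamma (x + 1) * rGamma (y + 1) * rGamma (x - y + 1)"

end

theory Submission
  imports Defs "HOL-Computational_Algebra.Polynomial"
begin

definition LinF :: "(nat \<Rightarrow> nat \<Rightarrow> complex) \<Rightarrow> nat \<Rightarrow> complex poly \<Rightarrow> complex" where
  "LinF V N p = (\<Sum>j\<le>N. coeff p j * V j 0)"

lemma LinF_diff: "LinF V N (p - q) = LinF V N p - LinF V N q"
  by (simp add: LinF_def algebra_simps sum_subtractf)

lemma LinF_smult: "LinF V N (smult c p) = c * LinF V N p"
  by (simp add: LinF_def sum_distrib_left mult.assoc)

lemma LinF_sum: "LinF V N (\<Sum>k\<in>S. F k) = (\<Sum>k\<in>S. LinF V N (F k))"
  by (simp add: LinF_def coeff_sum sum_distrib_right sum.swap[of _ S])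

lemma xpow_coeff: "coeff ([:0,1:]^a :: complex poly) j = (if j = a then 1 else 0)"
  using coeff_monom[of "1::complex" a j] by (simp add: monom_altdef)

lemma LinF_basis:
  assumes rec: "\<And>a b. V a b = V a (Suc b) + V (Suc a) b"
  shows "a + b \<le> N \<Longrightarrow> LinF V N ([:0,1:]^a * [:1,-1:]^b) = V a b"
proof (induction b arbitrary: a)
  case 0
  have "(\<Sum>j\<le>N. (if j = a then 1 else 0) * V j 0) = (\<Sum>j\<le>N. if j = a then V j 0 else 0)"
    by (rule sum.cong) auto
  then show ?case using 0 by (simp add: LinF_def xpow_coeff)
next
  case (Suc b)
  have eq: "([:0,1:]^a * [:1,-1:]^Suc b :: complex poly)
     = [:0,1:]^a * [:1,-1:]^b - [:0,1:]^Suc a * [:1,-1:]^b"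
    by (simp add: poly_eq_poly_eq_iff[symmetric] fun_eq_iff algebra_simps)
  have i1: "LinF V N ([:0,1:]^a * [:1,-1:]^b) = V a b" using Suc.IH[of a] Suc.prems by simp
  have i2: "LinF V N ([:0,1:]^Suc a * [:1,-1:]^b) = V (Suc a) b" using Suc.IH[of "Suc a"] Suc.prems by simp
  show ?case unfolding eq LinF_diff i1 i2 using rec[of a b] by simp
qed

lemma transfer:
  fixes f g :: "nat \<Rightarrow> complex" and V :: "nat \<Rightarrow> nat \<Rightarrow> complex"
  assumes rec: "\<And>a b. V a b = V a (Suc b) + V (Suc a) b"
    and id: "\<And>t. (\<Sum>k\<in>S. f k * t^k * (1-t)^(n-k)) = (\<Sum>k=l2..u2. g k * t^k)"
    and S: "finite S" "\<forall>k\<in>S. k \<le> n"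
  shows "(\<Sum>k\<in>S. f k * V k (n-k)) = (\<Sum>k=l2..u2. g k * V k 0)"
proof -
  define P where "P = (\<Sum>k\<in>S. smult (f k) ([:0,1:]^k * [:1,-1:]^(n-k)))"
  define Q where "Q = (\<Sum>k=l2..u2. smult (g k) ([:0,1:]^k * [:1,-1:]^0))"
  have "poly P = poly Q"
    using id by (simp add: P_def Q_def poly_sum fun_eq_iff mult.assoc)
  hence PQ: "P = Q" by (simp add: poly_eq_poly_eq_iff)
  define N where "N = n + u2"
  have "LinF V N P = (\<Sum>k\<in>S. f k * V k (n-k))"
    unfolding P_def LinF_sum LinF_smult
    by (rule sum.cong, simp, subst LinF_basis[where V=V, OF rec], use S N_def in auto)
  moreover have "LinF V N Q = (\<Sum>k=l2..u2. g k * V k 0)"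
    unfolding Q_def LinF_sum LinF_smult
    by (rule sum.cong, simp, subst LinF_basis[where V=V, OF rec], use N_def in auto)
  ultimately show ?thesis using PQ by simp
qed

lemma vanish:
  fixes f g :: "nat \<Rightarrow> complex"
  assumes id: "\<forall>t::complex.
      (\<Sum>k=l1..u1. f k * t ^ k * (1 - t) powi (int n - int k))
    = (\<Sum>k=l2..u2. g k * t ^ k)"
  shows "\<forall>k\<in>{l1..u1}. n < k \<longrightarrow> f k = 0"
proof (rule ccontr)
  assume "\<not> (\<forall>k\<in>{l1..u1}. n < k \<longrightarrow> f k = 0)"
  then obtain k0 where k0: "k0 \<in> {l1..u1}" "n < k0" "f k0 \<noteq> 0" by blast
  define T where "T = {k\<in>{l1..u1}. f k \<noteq> 0}"
  have finT: "finite T" by (simp add: T_def)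
  have k0T: "k0 \<in> T" using k0 by (simp add: T_def)
  define K where "K = Max T"
  have KT: "K \<in> T" using finT k0T K_def Max_in by blast
  have nK: "n < K" using Max_ge[OF finT k0T] k0 K_def by simp
  have leK: "k \<le> K" if "k \<in> {l1..u1}" "f k \<noteq> 0" for k
    using Max_ge[OF finT, of k] that by (simp add: T_def K_def)
  define A where "A = (\<Sum>k=l1..u1. smult (f k) ([:0,1:]^k * [:1,-1:]^(K-k)))"
  define Q where "Q = (\<Sum>k=l2..u2. smult (g k) ([:0,1:]^k))"
  have polyA: "poly A t = (1-t)^(K-n) * poly Q t" if t1: "t \<noteq> 1" for t
  proof -
    have "poly A t = (\<Sum>k=l1..u1. (1-t)^(K-n) * (f k * t ^ k * (1 - t) powi (int n - int k)))"
      unfolding A_def poly_sum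
    proof (rule sum.cong)
      fix k assume k: "k \<in> {l1..u1}"
      show "poly (smult (f k) ([:0, 1:] ^ k * [:1, - 1:] ^ (K - k))) t =
          (1 - t) ^ (K - n) * (f k * t ^ k * (1 - t) powi (int n - int k))"
      proof (cases "f k = 0")
        case False
        hence "k \<le> K" using leK k by auto
        have ne: "1 - t \<noteq> 0" using t1 by simp
        have "(1-t)^(K-k) = (1-t) powi ((int n - int k) + int (K-n))"
          using `k \<le> K` nK by (simp add: power_int_of_nat[symmetric] del: power_int_of_nat)
        also have "\<dots> = (1-t) powi (int n - int k) * (1-t)^(K-n)"
          using ne by (simp add: power_int_add)
        finally show ?thesis by (simp add: algebra_simps)
      qed simp
    qed simp
    also have "\<dots> = (1-t)^(K-n) * poly Q t"
      using id by (simp add: sum_distrib_left[symmetric] Q_def poly_sum)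
    finally show ?thesis .
  qed
  have "A - [:1,-1:]^(K-n) * Q = 0"
  proof (rule ccontr)
    assume nz: "A - [:1,-1:]^(K-n) * Q \<noteq> 0"
    have "{t. t \<noteq> (1::complex)} \<subseteq> {t. poly (A - [:1,-1:]^(K-n) * Q) t = 0}"
      using polyA by auto
    moreover have "infinite {t. t \<noteq> (1::complex)}"
    proof -
      have "infinite (UNIV - {1::complex})"
        by (rule Diff_infinite_finite) (auto simp: infinite_UNIV_char_0)
      moreover have "{t. t \<noteq> (1::complex)} = UNIV - {1}" by auto
      ultimately show ?thesis by simp
    qed
    ultimately show False using poly_roots_finite[OF nz] finite_subset by blast
  qed
  hence "poly A 1 = poly ([:1,-1:]^(K-n) * Q) 1" by (metis eq_iff_diff_eq_0)
  also have "\<dots> = 0" using nK by simp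
  finally have A1: "poly A 1 = 0" .
  have "poly A 1 = (\<Sum>k=l1..u1. if k = K then f K else 0)"
    unfolding A_def poly_sum
  proof (rule sum.cong)
    fix k assume k: "k \<in> {l1..u1}"
    show "poly (smult (f k) ([:0, 1:] ^ k * [:1, - 1:] ^ (K - k))) 1 = (if k = K then f K else 0)"
    proof (cases "f k = 0 \<or> k = K")
      case False
      hence "k < K" using leK[OF k] by force
      thus ?thesis using False by simp
    qed auto
  qed simp
  also have "\<dots> = f K" using KT by (simp add: T_def)
  finally show False using A1 KT by (simp add: T_def)
qed

lemma np_s:
  assumes "s \<notin> neg_ints" "s \<noteq> 0"
  shows "of_nat a + s \<notin> \<int>\<^sub>\<le>\<^sub>0"
proof
  assume "of_nat a + s \<in> \<int>\<^sub>\<le>\<^sub>0"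
  then obtain m where m: "of_nat a + s = of_int m" "m \<le> 0" by (auto elim!: nonpos_Ints_cases)
  hence sm: "s = of_int (m - int a)" by (simp add: algebra_simps)
  show False
  proof (cases "m - int a < 0")
    case True
    have "s \<in> neg_ints" unfolding neg_ints_def using sm True by blast
    thus False using assms(1) by simp
  next
    case False
    hence "m - int a = 0" using m by simp
    thus False using assms(2) sm by simp
  qed
qed

lemma np_r:
  assumes "r \<notin> neg_ints"
  shows "of_nat a + r + 1 \<notin> \<int>\<^sub>\<le>\<^sub>0"
proof
  assume "of_nat a + r + 1 \<in> \<int>\<^sub>\<le>\<^sub>0"
  then obtain m where m: "of_nat a + r + 1 = of_int m" "m \<le> 0" by (auto elim!: nonpos_Ints_cases)
  hence sm: "r = of_int (m - int a - 1)" by (simp add: algebra_simps)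
  have "m - int a - 1 < 0" using m by simp
  hence "r \<in> neg_ints" unfolding neg_ints_def using sm by blast
  thus False using assms by simp
qed

lemma conv_gen:
  fixes X Y Z :: complex
  assumes "X \<notin> \<int>\<^sub>\<le>\<^sub>0" "Y \<notin> \<int>\<^sub>\<le>\<^sub>0" "Z \<notin> \<int>\<^sub>\<le>\<^sub>0"
  shows "1 / (X * (Gamma Z * rGamma (X + 1) * rGamma Y)) = Gamma X * Gamma Y * rGamma Z"
proof -
  have X0: "X \<noteq> 0" using assms(1) by auto
  have r1: "rGamma (X + 1) = rGamma X / X" using rGamma_plus1[of X] X0 by (simp add: field_simps)
  have n1: "Gamma X \<noteq> 0" "Gamma Y \<noteq> 0" "Gamma Z \<noteq> 0" using assms Gamma_nonzero by auto
  have g: "Gamma (1 + X) = X * Gamma X" using Gamma_plus1[OF assms(1)] by (simp add: add.commute)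
  show ?thesis unfolding r1 rGamma_inverse_Gamma using n1 X0 g by (simp add: field_simps)
qed

lemma alg2: fixes A B C p q x y z :: complex
  assumes "z \<noteq> 0" "y \<noteq> 0" "z = x + y"
  shows "A*B*C*(p - q) = A*(y*B)*(C/z)*((p+1/y) - (q+1/z)) + (x*A)*B*(C/z)*(p - (q+1/z))"
proof -
  have x: "x = z - y" using assms by simp
  show ?thesis unfolding x using assms(1,2) by (simp add: field_simps)
qed

lemma alg1: fixes A B C x y z :: complex
  assumes "z \<noteq> 0" "z = x + y"
  shows "A*B*C = A*(y*B)*(C/z) + (x*A)*B*(C/z)"
proof -
  have x: "x = z - y" using assms by simp
  show ?thesis unfolding x using assms(1) by (simp add: field_simps)
qed

lemma rec_gen:
  fixes x y z :: complex
  assumes x: "x \<notin> \<int>\<^sub>\<le>\<^sub>0" and y: "y \<notin> \<int>\<^sub>\<le>\<^sub>0" and z: "z = x + y" "z \<noteq> 0"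
  shows "Gamma x * Gamma y * rGamma z
       = Gamma x * Gamma (y + 1) * rGamma (z + 1) + Gamma (x + 1) * Gamma y * rGamma (z + 1)"
    and "Gamma x * Gamma y * rGamma z * (Digamma y - Digamma z)
       = Gamma x * Gamma (y + 1) * rGamma (z + 1) * (Digamma (y + 1) - Digamma (z + 1))
         + Gamma (x + 1) * Gamma y * rGamma (z + 1) * (Digamma y - Digamma (z + 1))"
proof -
  have rz: "rGamma (z + 1) = rGamma z / z" using rGamma_plus1[of z] z by (simp add: field_simps)
  have gx: "Gamma (x + 1) = x * Gamma x" using Gamma_plus1[OF x] .
  have gy: "Gamma (y + 1) = y * Gamma y" using Gamma_plus1[OF y] .
  have y0: "y \<noteq> 0" using y by auto
  have dy: "Digamma (y + 1) = Digamma y + 1 / y" using Digamma_plus1[OF y0] .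
  have dz: "Digamma (z + 1) = Digamma z + 1 / z" using Digamma_plus1[OF z(2)] .
  show "Gamma x * Gamma y * rGamma z
       = Gamma x * Gamma (y + 1) * rGamma (z + 1) + Gamma (x + 1) * Gamma y * rGamma (z + 1)"
    unfolding rz gx gy using alg1[OF z(2) z(1)] .
  show "Gamma x * Gamma y * rGamma z * (Digamma y - Digamma z)
       = Gamma x * Gamma (y + 1) * rGamma (z + 1) * (Digamma (y + 1) - Digamma (z + 1))
         + Gamma (x + 1) * Gamma y * rGamma (z + 1) * (Digamma y - Digamma (z + 1))"
    unfolding rz gx gy dy dz using alg2[OF z(2) y0 z(1)] .
qed

theorem lemma6:
  fixes n l1 u1 l2 u2 :: nat and f g :: "nat \<Rightarrow> complex" and r s :: complex
  assumes poly_id: "\<forall>t::complex.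
      (\<Sum>k=l1..u1. f k * t ^ k * (1 - t) powi (int n - int k))
    = (\<Sum>k=l2..u2. g k * t ^ k)"
    and r: "r \<notin> neg_ints" and s: "s \<notin> neg_ints" and s0: "s \<noteq> 0"
    and rs: "r - s \<notin> neg_ints"
  shows "(\<Sum>k=l1..u1. f k / ((of_nat k + s) * cbinom (of_nat n + r) (of_nat k + s)))
       = (\<Sum>k=l2..u2. g k / ((of_nat k + s) * cbinom (of_nat k + r) (of_nat k + s)))
   \<and> (\<Sum>k=l1..u1. f k * (harm (of_nat n - of_nat k + r - s) - harm (of_nat n + r))
                      / ((of_nat k + s) * cbinom (of_nat n + r) (of_nat k + s)))
       = (\<Sum>k=l2..u2. g k * (harm (r - s) - harm (of_nat k + r))
                      / ((of_nat k + s) * cbinom (of_nat k + r) (of_nat k + s)))"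
proof -
  have fz: "\<forall>k\<in>{l1..u1}. n < k \<longrightarrow> f k = 0" by (rule vanish[OF poly_id])
  define S where "S = {k\<in>{l1..u1}. k \<le> n}"
  have finS: "finite S" and Sn: "\<forall>k\<in>S. k \<le> n" by (auto simp: S_def)
  have idS: "(\<Sum>k\<in>S. f k * t^k * (1-t)^(n-k)) = (\<Sum>k=l2..u2. g k * t^k)" for t
  proof -
    have "(\<Sum>k\<in>S. f k * t^k * (1-t)^(n-k)) = (\<Sum>k=l1..u1. f k * t ^ k * (1 - t) powi (int n - int k))"
      unfolding S_def using fz
      by (intro sum.mono_neutral_cong_left) (auto simp: power_int_of_nat[symmetric] of_nat_diff simp del: power_int_of_nat)
    thus ?thesis using poly_id by simp
  qed
  have A: "\<And>a. of_nat a + s \<notin> \<int>\<^sub>\<le>\<^sub>0" using np_s[OF s s0] .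
  have B: "\<And>b. of_nat b + r - s + 1 \<notin> \<int>\<^sub>\<le>\<^sub>0" using np_r[OF rs] by (simp add: algebra_simps)
  have C: "\<And>c. of_nat c + r + 1 \<notin> \<int>\<^sub>\<le>\<^sub>0" using np_r[OF r] .
  define W where "W a b = Gamma (of_nat a + s) * Gamma (of_nat b + r - s + 1) * rGamma (of_nat a + of_nat b + r + 1)" for a b :: nat
  define W2 where "W2 a b = W a b * (Digamma (of_nat b + r - s + 1) - Digamma (of_nat a + of_nat b + r + 1))" for a b :: nat
  have conv: "1 / ((of_nat a + s) * cbinom (of_nat a + of_nat b + r) (of_nat a + s)) = W a b" for a b
  proof -
    have C': "of_nat a + of_nat b + r + 1 \<notin> \<int>\<^sub>\<le>\<^sub>0" using C[of "a+b"] by simp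
    have e: "of_nat a + of_nat b + r - (of_nat a + s) + 1 = of_nat b + r - s + 1" by simp
    show ?thesis unfolding cbinom_def W_def e
      by (rule conv_gen[OF A B C'])
  qed
  have e1: "of_nat (Suc b) + r - s + 1 = (of_nat b + r - s + 1) + 1" for b :: nat by simp
  have e2: "of_nat a + of_nat (Suc b) + r + 1 = (of_nat a + of_nat b + r + 1) + 1" for a b :: nat by simp
  have e3: "of_nat (Suc a) + of_nat b + r + 1 = (of_nat a + of_nat b + r + 1) + 1" for a b :: nat by simp
  have e4: "of_nat (Suc a) + s = (of_nat a + s) + 1" for a :: nat by simp
  have zz: "of_nat a + of_nat b + r + 1 = (of_nat a + s) + (of_nat b + r - s + 1)"
     "of_nat a + of_nat b + r + 1 \<noteq> 0" for a b :: nat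
    using C[of "a+b"] by (auto simp: add.assoc)
  have recW: "W a b = W a (Suc b) + W (Suc a) b" for a b
    unfolding W_def e1 e2 e3 e4 by (rule rec_gen(1)[OF A B zz])
  have recW2: "W2 a b = W2 a (Suc b) + W2 (Suc a) b" for a b
    unfolding W2_def W_def e1 e2 e3 e4 by (rule rec_gen(2)[OF A B zz])
  have T1: "(\<Sum>k\<in>S. f k * W k (n-k)) = (\<Sum>k=l2..u2. g k * W k 0)"
    by (rule transfer[where V=W, OF recW idS finS Sn])
  have T2: "(\<Sum>k\<in>S. f k * W2 k (n-k)) = (\<Sum>k=l2..u2. g k * W2 k 0)"
    by (rule transfer[where V=W2, OF recW2 idS finS Sn])
  have cL: "1 / ((of_nat k + s) * cbinom (of_nat n + r) (of_nat k + s)) = W k (n-k)" if "k \<le> n" for k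
  proof -
    have "of_nat k + of_nat (n-k) + r = of_nat n + r" using that by (simp add: of_nat_diff)
    thus ?thesis using conv[of k "n-k"] by simp
  qed
  have cR: "1 / ((of_nat k + s) * cbinom (of_nat k + r) (of_nat k + s)) = W k 0" for k
    using conv[of k 0] by simp
  have hL: "harm (of_nat n - of_nat k + r - s) - harm (of_nat n + r)
      = Digamma (of_nat (n-k) + r - s + 1) - Digamma (of_nat k + of_nat (n-k) + r + 1)" if "k \<le> n" for k
    using that by (simp add: harm_def of_nat_diff)
  have hR: "harm (r - s) - harm (of_nat k + r)
      = Digamma (of_nat 0 + r - s + 1) - Digamma (of_nat k + of_nat 0 + r + 1)" for k
    by (simp add: harm_def)
  have L1: "(\<Sum>k=l1..u1. f k / ((of_nat k + s) * cbinom (of_nat n + r) (of_nat k + s)))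
      = (\<Sum>k\<in>S. f k * W k (n-k))"
  proof (rule sym, rule sum.mono_neutral_cong_left)
    show "\<forall>i\<in>{l1..u1} - S. f i / ((of_nat i + s) * cbinom (of_nat n + r) (of_nat i + s)) = 0"
      using fz by (auto simp: S_def)
    show "f x * W x (n - x) = f x / ((of_nat x + s) * cbinom (of_nat n + r) (of_nat x + s))" if "x \<in> S" for x
      using cL[of x] that by (simp add: S_def divide_inverse)
  qed (auto simp: S_def)
  have R1: "(\<Sum>k=l2..u2. g k / ((of_nat k + s) * cbinom (of_nat k + r) (of_nat k + s)))
      = (\<Sum>k=l2..u2. g k * W k 0)"
    by (rule sum.cong) (use cR in \<open>auto simp: divide_inverse\<close>)
  have L2: "(\<Sum>k=l1..u1. f k * (harm (of_nat n - of_nat k + r - s) - harm (of_nat n + r))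
                      / ((of_nat k + s) * cbinom (of_nat n + r) (of_nat k + s)))
      = (\<Sum>k\<in>S. f k * W2 k (n-k))"
  proof (rule sym, rule sum.mono_neutral_cong_left)
    show "\<forall>i\<in>{l1..u1} - S. f i * (harm (of_nat n - of_nat i + r - s) - harm (of_nat n + r))
                      / ((of_nat i + s) * cbinom (of_nat n + r) (of_nat i + s)) = 0"
      using fz by (auto simp: S_def)
    show "f x * W2 x (n - x) = f x * (harm (of_nat n - of_nat x + r - s) - harm (of_nat n + r))
                      / ((of_nat x + s) * cbinom (of_nat n + r) (of_nat x + s))" if "x \<in> S" for x
    proof -
      have xn: "x \<le> n" using that by (simp add: S_def)
      show ?thesis unfolding hL[OF xn] W2_def cL[OF xn, symmetric] by simp
    qed
  qed (auto simp: S_def)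
  have R2: "(\<Sum>k=l2..u2. g k * (harm (r - s) - harm (of_nat k + r))
                      / ((of_nat k + s) * cbinom (of_nat k + r) (of_nat k + s)))
      = (\<Sum>k=l2..u2. g k * W2 k 0)"
    by (rule sum.cong) (simp_all add: hR W2_def cR[symmetric] del: of_nat_0)
  show ?thesis using T1 T2 L1 L2 R1 R2 by simp
qed

end
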